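(* There is a constant $C_1>0$ such that $$\mathcal{A}(\{z\in\mathbb{D}:|f(z)|>\lambda\})\le\frac{C_1}{\lambda^2}\,|f(0)|^2$$ for every analytic function $f\colon\mathbb{D}\to\Pi^+$ and every $\lambda>0$. In particular, there is a constant $K_1>0$ such that $\|f\|_{L^1(\mathbb{D},\mathcal{A})}\le K_1|f(0)|$ for every such function.
   Context: $\mathbb{D}$ is the open unit disk, $\mathcal{A}$ the normalized area measure $dx\,dy/\pi$ on $\mathbb{D}$, and $\Pi^+=\{z\in\mathbb{C}:\operatorname{Re}z>0\}$. *)

theory Defs
  imports "HOL-Complex_Analysis.Complex_Analysis"
begin

definition disk_area :: "complex measure" where
  "disk_area = scale_measure (ennreal (1 / pi)) (restrict_space lborel (ball 0 1))"

end

theory Submission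
  imports Defs
begin

definition cp :: "real \<Rightarrow> real \<Rightarrow> complex" where
  "cp r t = of_real r * exp (2 * of_real pi * \<i> * of_real t)"

lemma cp_circ: "circlepath 0 r = cp r"
  by (rule ext) (simp add: circlepath cp_def)

lemma norm_cp [simp]: "norm (cp r t) = \<bar>r\<bar>"
  by (simp add: cp_def norm_mult)

lemma continuous_cp [continuous_intros]: "continuous_on S (cp r)"
  unfolding cp_def by (intro continuous_intros)

lemma cnj_cp: "r > 0 \<Longrightarrow> cnj (cp r t) = of_real (r^2) / cp r t"
proof -
  assume r: "r > 0"
  have "cp r t * cnj (cp r t) = of_real ((norm (cp r t))^2)"
    by (simp only: complex_norm_square)
  moreover have "cp r t \<noteq> 0"
  proof
    assume "cp r t = 0"
    then have "norm (cp r t) = 0" by simp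
    with r show False by simp
  qed
  ultimately show ?thesis using r by (simp add: field_simps)
qed

lemma cauchy_param:
  assumes "f holomorphic_on cball 0 r" "norm w < r"
  shows "((\<lambda>t. f (cp r t) * cp r t / (cp r t - w)) has_integral f w) {0..1}"
proof -
  have "((\<lambda>u. f u/(u-w)) has_contour_integral (2 * of_real pi * \<i> * f w)) (circlepath 0 r)"
    using Cauchy_integral_circlepath_simple[OF assms(1)] assms(2) by simp
  then have "((\<lambda>t. f (cp r t)/(cp r t - w) * (2 * of_real pi * \<i> * cp r t)) has_integral (2 * of_real pi * \<i> * f w)) {0..1}"
    unfolding has_contour_integral cp_circ
  proof (rule has_integral_eq[rotated])
    fix x :: real assume "x \<in> {0..1}"
    then have "vector_derivative (cp r) (at x) = 2 * of_real pi * \<i> * cp r x"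
      using vector_derivative_circlepath[of 0 r x] by (simp add: cp_circ cp_def)
    then show "f (cp r x) / (cp r x - w) * vector_derivative (cp r) (at x) =
       f (cp r x) / (cp r x - w) * (2 * of_real pi * \<i> * cp r x)" by simp
  qed
  then have "((\<lambda>t. (1 / (2 * of_real pi * \<i>)) * (f (cp r t)/(cp r t - w) * (2 * of_real pi * \<i> * cp r t))) has_integral (1 / (2 * of_real pi * \<i>)) * (2 * of_real pi * \<i> * f w)) {0..1}"
    by (rule has_integral_mult_right)
  moreover have "(1 / (2 * of_real pi * \<i>)) * (2 * of_real pi * \<i> * f w) = f w" by simp
  moreover have "\<And>t. (1 / (2 * of_real pi * \<i>)) * (f (cp r t)/(cp r t - w) * (2 * of_real pi * \<i> * cp r t))
     = f (cp r t) * cp r t / (cp r t - w)" by (simp add: algebra_simps)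
  ultimately show ?thesis by simp
qed

lemma cp_nonzero: "r > 0 \<Longrightarrow> cp r t \<noteq> 0"
  by (metis abs_of_pos less_irrefl norm_cp norm_zero)

lemma schwarz_param:
  assumes hol: "f holomorphic_on ball 0 1" and r: "0 < r" "r < 1" and z: "norm z < r"
  shows "((\<lambda>t. of_real (Re (f (cp r t))) * ((cp r t + z) / (cp r t - z)))
           has_integral (f z - \<i> * of_real (Im (f 0)))) {0..1}"
proof -
  have holc: "f holomorphic_on cball 0 r"
    by (rule holomorphic_on_subset[OF hol]) (use r in auto)
  have cz: "cp r t \<noteq> z" for t using z norm_cp[of r t] r by auto
  have c0: "cp r t \<noteq> 0" for t using cp_nonzero r by blast
  have I1: "((\<lambda>t. f (cp r t) * cp r t / (cp r t - z)) has_integral f z) {0..1}"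
    by (rule cauchy_param[OF holc z])
  have "((\<lambda>t. f (cp r t) * cp r t / (cp r t - 0)) has_integral f 0) {0..1}"
    by (rule cauchy_param[OF holc]) (use r in simp)
  then have I0: "((\<lambda>t. f (cp r t)) has_integral f 0) {0..1}"
    using c0 by simp
  define g where "g w = f w * of_real (r^2) / (of_real (r^2) - cnj z * w)" for w
  have den: "of_real (r^2) - cnj z * w \<noteq> 0" if "w \<in> cball 0 r" for w
  proof
    assume "of_real (r^2) - cnj z * w = 0"
    then have "norm (cnj z * w) = r^2" by (metis eq_iff_diff_eq_0 norm_of_real abs_power2 power2_abs real_norm_def)
    moreover have "norm (cnj z * w) < r^2"
    proof -
      have "norm (cnj z * w) = norm z * norm w" by (simp add: norm_mult)
      also have "\<dots> \<le> norm z * r" using that by (intro mult_left_mono) auto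
      also have "\<dots> < r * r" using z r by (intro mult_strict_right_mono) auto
      finally show ?thesis by (simp add: power2_eq_square)
    qed
    ultimately show False by simp
  qed
  have holg: "g holomorphic_on cball 0 r"
    unfolding g_def by (intro holomorphic_intros holc) (use den in auto)
  have "((\<lambda>t. g (cp r t) * cp r t / (cp r t - 0)) has_integral g 0) {0..1}"
    by (rule cauchy_param[OF holg]) (use r in simp)
  then have "((\<lambda>t. g (cp r t)) has_integral f 0) {0..1}"
    using c0 r by (simp add: g_def)
  then have "((\<lambda>t. cnj (g (cp r t))) has_integral cnj (f 0)) {0..1}"
    using has_integral_cnj[of "\<lambda>t. g (cp r t)"] by (simp add: o_def)
  moreover have "cnj (g (cp r t)) = cnj (f (cp r t)) * cp r t / (cp r t - z)" for t
  proof -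
    have "cnj (g (cp r t)) = cnj (f (cp r t)) * of_real (r^2) / (of_real (r^2) - z * cnj (cp r t))"
      by (simp add: g_def)
    also have "\<dots> = cnj (f (cp r t)) * of_real (r^2) / (of_real (r^2) - z * (of_real (r^2) / cp r t))"
      by (simp add: cnj_cp r)
    also have "\<dots> = cnj (f (cp r t)) * cp r t / (cp r t - z)"
      using c0[of t] cz[of t] r by (simp add: field_simps)
    finally show ?thesis .
  qed
  ultimately have I2: "((\<lambda>t. cnj (f (cp r t)) * cp r t / (cp r t - z)) has_integral cnj (f 0)) {0..1}"
    by simp
  have I3: "((\<lambda>t. (f (cp r t) + cnj (f (cp r t))) / 2) has_integral (f 0 + cnj (f 0)) / 2) {0..1}"
    using has_integral_divide[OF has_integral_add[OF I0 has_integral_cnj[of "\<lambda>t. f (cp r t)", THEN iffD2, OF I0]], of 2]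
    by (simp add: o_def)
  have I4: "((\<lambda>t. f (cp r t) * cp r t / (cp r t - z) + cnj (f (cp r t)) * cp r t / (cp r t - z)
        - (f (cp r t) + cnj (f (cp r t))) / 2) has_integral (f z + cnj (f 0) - (f 0 + cnj (f 0)) / 2)) {0..1}"
    by (intro has_integral_diff has_integral_add I1 I2 I3)
  have e1: "f z + cnj (f 0) - (f 0 + cnj (f 0)) / 2 = f z - \<i> * of_real (Im (f 0))"
    by (simp add: complex_eq_iff)
  have e2: "f (cp r t) * cp r t / (cp r t - z) + cnj (f (cp r t)) * cp r t / (cp r t - z)
        - (f (cp r t) + cnj (f (cp r t))) / 2 = of_real (Re (f (cp r t))) * ((cp r t + z) / (cp r t - z))" for t
  proof -
    have R: "of_real (Re (f (cp r t))) = (f (cp r t) + cnj (f (cp r t))) / 2"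
      by (simp add: complex_add_cnj)
    have aux: "\<And>a b c::complex. c \<noteq> z \<Longrightarrow> a * c / (c - z) + b * c / (c - z) - (a + b) / 2 = (a + b) / 2 * ((c + z) / (c - z))"
    proof -
      fix a b c :: complex assume "c \<noteq> z"
      then have "c - z \<noteq> 0" by simp
      then show "a * c / (c - z) + b * c / (c - z) - (a + b) / 2 = (a + b) / 2 * ((c + z) / (c - z))"
      proof -
        assume nz: "c - z \<noteq> 0"
        have h: "(c + z) / (c - z) = 2 * c / (c - z) - 1" using nz by (simp add: field_simps)
        have "(a + b) / 2 * (2 * c / (c - z) - 1) = (a + b) * c / (c - z) - (a + b) / 2"
          by (simp add: right_diff_distrib)
        also have "\<dots> = a * c / (c - z) + b * c / (c - z) - (a + b) / 2"
          by (simp add: distrib_right add_divide_distrib)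
        finally show ?thesis unfolding h by simp
      qed
    qed
    show ?thesis unfolding R by (rule aux[OF cz])
  qed
  show ?thesis using I4 unfolding e1 e2 .
qed


lemma ennreal_le_suminf: "(f::nat\<Rightarrow>ennreal) i \<le> suminf f"
  using sum_le_suminf[of f "{i}"] by (simp add: summableI)

lemma emeasure_cball_complex: "0 \<le> s \<Longrightarrow> emeasure lborel (cball (c::complex) s) = ennreal (pi * s^2)"
  by (simp add: emeasure_cball unit_ball_vol_2)

lemma meas_ci: "(\<lambda>x. (a::ennreal) * indicator (cball (c::complex) s) x) \<in> borel_measurable borel"
  by (intro borel_measurable_times_ennreal borel_measurable_const borel_measurable_indicator borel_closed) auto

lemma kernel_bound:
  fixes E :: "complex set" and c :: complex
  assumes E: "E \<in> sets lborel" "emeasure lborel E < \<infinity>"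
  shows "(\<integral>\<^sup>+z. ennreal (1 / norm (c - z)) * indicator E z \<partial>lborel)
           \<le> ennreal ((1 + 4 * pi) * sqrt (measure lborel E))"
proof -
  define m where "m = measure lborel E"
  have Em: "emeasure lborel E = ennreal m"
    unfolding m_def using E(2) by (simp add: emeasure_eq_ennreal_measure)
  have m0: "m \<ge> 0" unfolding m_def by simp
  show ?thesis
  proof (cases "m = 0")
    case True
    then have "E \<in> null_sets lborel" using Em E(1) by (simp add: null_sets_def)
    then have "(\<integral>\<^sup>+z. ennreal (1 / norm (c - z)) * indicator E z \<partial>lborel) = 0"
      by (rule nn_integral_null_set)
    then show ?thesis by simp
  next
    case False
    define \<rho> where "\<rho> = sqrt m"
    have \<rho>: "\<rho> > 0" using False m0 unfolding \<rho>_def by simp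
    define S where "S z = (\<Sum>k. ennreal (2^(k+1) / \<rho>) * indicator (cball c (\<rho> / 2^k)) z)" for z
    have pw: "ennreal (1 / norm (c - z)) * indicator E z \<le> ennreal (1 / \<rho>) * indicator E z + S z" for z
    proof (cases "z \<in> E")
      case False then show ?thesis by simp
    next
      case True
      define d where "d = norm (c - z)"
      have d0: "d \<ge> 0" unfolding d_def by simp
      consider "d = 0" | "d \<ge> \<rho>" | "0 < d" "d < \<rho>" using d0 by linarith
      then show ?thesis
      proof cases
        case 1 then show ?thesis by (simp add: d_def)
      next
        case 2
        then have "1 / d \<le> 1 / \<rho>" using \<rho> by (intro divide_left_mono) auto
        then have "ennreal (1 / norm (c - z)) * indicator E z \<le> ennreal (1 / \<rho>) * indicator E z"
          using True by (simp add: d_def ennreal_leI)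
        then show ?thesis by (simp add: add_increasing2)
      next
        case 3
        have "1 \<le> \<rho> / d" using 3 by simp
        obtain N where N: "\<rho> / d < (2::real) ^ N" using real_arch_pow[of 2 "\<rho> / d"] by auto
        define n' where "n' = (LEAST n. \<rho> / d < (2::real) ^ n)"
        have n'1: "\<rho> / d < (2::real) ^ n'" unfolding n'_def by (rule LeastI[of _ N]) (rule N)
        have "n' \<noteq> 0"
        proof
          assume "n' = 0" with n'1 \<open>1 \<le> \<rho> / d\<close> show False by simp
        qed
        then obtain n where nn: "n' = Suc n" by (cases n') auto
        have "\<not> \<rho> / d < (2::real) ^ n" unfolding n'_def[symmetric]
          using not_less_Least[of n "\<lambda>n. \<rho> / d < (2::real) ^ n"] nn n'_def by auto
        then have n: "2 ^ n \<le> \<rho> / d" "\<rho> / d < 2 ^ (n + 1)" using n'1 nn by auto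
        have "2 ^ n * d \<le> \<rho>" using n(1) 3 by (simp add: le_divide_eq)
        then have "d \<le> \<rho> / 2 ^ n" by (simp add: le_divide_eq mult.commute)
        then have inb: "z \<in> cball c (\<rho> / 2 ^ n)" by (simp add: d_def dist_norm)
        have "1 / d \<le> 2 ^ (n + 1) / \<rho>" using n(2) 3 \<rho>
          by (simp add: field_simps)
        then have "ennreal (1 / norm (c - z)) * indicator E z \<le> ennreal (2^(n+1) / \<rho>) * indicator (cball c (\<rho> / 2^n)) z"
          using True inb by (simp add: d_def ennreal_leI)
        also have "\<dots> \<le> S z" unfolding S_def by (rule ennreal_le_suminf[where f="\<lambda>k. ennreal (2^(k+1) / \<rho>) * indicator (cball c (\<rho> / 2^k)) z"])
        finally show ?thesis by (simp add: add_increasing)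
      qed
    qed
    have mS: "S \<in> borel_measurable lborel" unfolding S_def
      by (intro borel_measurable_suminf_order borel_measurable_times_ennreal borel_measurable_const borel_measurable_indicator borel_closed) auto
    have "(\<integral>\<^sup>+z. ennreal (1 / norm (c - z)) * indicator E z \<partial>lborel)
        \<le> (\<integral>\<^sup>+z. ennreal (1 / \<rho>) * indicator E z + S z \<partial>lborel)"
      by (intro nn_integral_mono pw)
    also have "\<dots> = (\<integral>\<^sup>+z. ennreal (1 / \<rho>) * indicator E z \<partial>lborel) + (\<integral>\<^sup>+z. S z \<partial>lborel)"
      using E(1) mS by (intro nn_integral_add) auto
    also have "(\<integral>\<^sup>+z. ennreal (1 / \<rho>) * indicator E z \<partial>lborel) = ennreal (1 / \<rho>) * ennreal m"
      using nn_integral_cmult_indicator[OF E(1), of "ennreal (1 / \<rho>)"] Em by (simp add: mult.commute)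
    also have "\<dots> = ennreal \<rho>"
      using \<rho> m0 by (simp add: ennreal_mult'[symmetric] \<rho>_def field_simps)
    also have "(\<integral>\<^sup>+z. S z \<partial>lborel) = (\<Sum>k. \<integral>\<^sup>+z. ennreal (2^(k+1) / \<rho>) * indicator (cball c (\<rho> / 2^k)) z \<partial>lborel)"
      unfolding S_def by (intro nn_integral_suminf) (simp add: meas_ci)
    also have "\<dots> = (\<Sum>k. ennreal (2 * pi * \<rho> * (1/2)^k))"
    proof (intro suminf_cong)
      fix k :: nat
      have "(\<integral>\<^sup>+z. ennreal (2^(k+1) / \<rho>) * indicator (cball c (\<rho> / 2^k)) z \<partial>lborel)
           = ennreal (2^(k+1) / \<rho>) * ennreal (pi * (\<rho> / 2^k)^2)"
        using nn_integral_cmult_indicator[of "cball c (\<rho> / 2^k)" lborel "ennreal (2^(k+1) / \<rho>)"]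
          emeasure_cball_complex[of "\<rho> / 2^k" c] \<rho> by (simp add: mult.commute)
      also have "\<dots> = ennreal (2^(k+1) / \<rho> * (pi * (\<rho> / 2^k)^2))"
        by (rule ennreal_mult'[symmetric]) (use \<rho> in simp)
      also have "2^(k+1) / \<rho> * (pi * (\<rho> / 2^k)^2) = 2 * pi * \<rho> * (1/2)^k"
        using \<rho> by (simp add: power2_eq_square power_divide field_simps power_add)
      finally show "(\<integral>\<^sup>+z. ennreal (2^(k+1) / \<rho>) * indicator (cball c (\<rho> / 2^k)) z \<partial>lborel)
           = ennreal (2 * pi * \<rho> * (1/2)^k)" .
    qed
    also have "\<dots> = ennreal (\<Sum>k. 2 * pi * \<rho> * (1/2)^k)"
      using \<rho> by (intro suminf_ennreal2) (auto intro!: summable_mult summable_geometric)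
    also have "(\<Sum>k. 2 * pi * \<rho> * (1/2::real)^k) = 4 * pi * \<rho>"
      using suminf_mult[OF summable_geometric[of "1/2::real"], of "2 * pi * \<rho>"] suminf_geometric[of "1/2::real"]
      by simp
    also have "ennreal \<rho> + ennreal (4 * pi * \<rho>) = ennreal ((1 + 4 * pi) * sqrt m)"
      using \<rho> by (simp add: ennreal_plus[symmetric] \<rho>_def algebra_simps del: ennreal_plus)
    finally show ?thesis unfolding m_def .
  qed
qed

lemma cp_in_ball: "0 < r \<Longrightarrow> r < 1 \<Longrightarrow> cp r t \<in> ball 0 1"
  by simp

lemma mean_param:
  assumes hol: "f holomorphic_on ball 0 1" and r: "0 < r" "r < 1"
  shows "((\<lambda>t. Re (f (cp r t))) has_integral Re (f 0)) {0..1}"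
proof -
  have holc: "f holomorphic_on cball 0 r"
    by (rule holomorphic_on_subset[OF hol]) (use r in auto)
  have "((\<lambda>t. f (cp r t) * cp r t / (cp r t - 0)) has_integral f 0) {0..1}"
    by (rule cauchy_param[OF holc]) (use r in simp)
  then have "((\<lambda>t. f (cp r t)) has_integral f 0) {0..1}"
    using cp_nonzero[OF r(1)] by simp
  then show ?thesis by (rule has_integral_Re)
qed

lemma cont_U:
  assumes hol: "f holomorphic_on ball 0 1" and r: "0 < r" "r < 1"
  shows "continuous_on UNIV (\<lambda>t. f (cp r t))"
proof -
  have "continuous_on (ball 0 1) f" using hol by (rule holomorphic_on_imp_continuous_on)
  then show ?thesis
    by (rule continuous_on_compose2[OF _ continuous_cp]) (use r in auto)
qed

lemma pointwise_bound:
  assumes hol: "f holomorphic_on ball 0 1" and pos: "\<forall>z\<in>ball 0 1. Re (f z) > 0"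
    and r: "0 < r" "r < 1" and z: "norm z < r"
  shows "ennreal (norm (f z)) \<le> ennreal \<bar>Im (f 0)\<bar> +
     (\<integral>\<^sup>+t. ennreal (2 * r * Re (f (cp r t))) * ennreal (1 / norm (cp r t - z)) * indicator {0..1} t \<partial>lborel)"
proof -
  have cz: "cp r t \<noteq> z" for t using z norm_cp[of r t] r by auto
  have U: "Re (f (cp r t)) > 0" for t using pos cp_in_ball[OF r] by blast
  define B where "B t = 2 * r * Re (f (cp r t)) / norm (cp r t - z)" for t
  have contf: "continuous_on UNIV (\<lambda>t. f (cp r t))" by (rule cont_U[OF hol r])
  have contB: "continuous_on {0..1} B" unfolding B_def
    by (intro continuous_intros continuous_on_subset[OF contf]) (auto simp: cz)
  have intB: "B integrable_on {0..1}" by (rule integrable_continuous_interval[OF contB])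
  have S: "((\<lambda>t. of_real (Re (f (cp r t))) * ((cp r t + z) / (cp r t - z)))
           has_integral (f z - \<i> * of_real (Im (f 0)))) {0..1}"
    by (rule schwarz_param[OF hol r z])
  have nb: "norm (of_real (Re (f (cp r t))) * ((cp r t + z) / (cp r t - z))) \<le> B t" for t
  proof -
    have "norm (cp r t + z) \<le> 2 * r"
      using norm_triangle_ineq[of "cp r t" z] z r by simp
    then have "norm (of_real (Re (f (cp r t))) * ((cp r t + z) / (cp r t - z)))
        = Re (f (cp r t)) * norm (cp r t + z) / norm (cp r t - z)"
      using U[of t] by (simp add: norm_mult norm_divide)
    also have "\<dots> \<le> Re (f (cp r t)) * (2 * r) / norm (cp r t - z)"
      using U[of t] \<open>norm (cp r t + z) \<le> 2 * r\<close>
      by (intro divide_right_mono mult_left_mono) auto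
    finally show ?thesis by (simp add: B_def mult_ac)
  qed
  have "norm (f z - \<i> * of_real (Im (f 0))) \<le> integral {0..1} B"
    using integral_norm_bound_integral[OF has_integral_integrable[OF S] intB nb] S
    by (simp add: integral_unique)
  then have le: "norm (f z) \<le> \<bar>Im (f 0)\<bar> + integral {0..1} B"
    using norm_triangle_ineq[of "f z - \<i> * of_real (Im (f 0))" "\<i> * of_real (Im (f 0))"]
    by (simp add: norm_mult)
  have "(\<integral>\<^sup>+t. ennreal (B t) * indicator {0..1} t \<partial>lborel) = ennreal (integral {0..1} B)"
  proof (rule nn_integral_has_integral_lebesgue')
    show "(B has_integral integral {0..1} B) {0..1}" using intB by (rule integrable_integral)
    fix t :: real assume "t \<in> {0..1}"
    show "0 \<le> B t" unfolding B_def using U[of t] r by simp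
  qed
  moreover have "ennreal (B t) = ennreal (2 * r * Re (f (cp r t))) * ennreal (1 / norm (cp r t - z))" for t
    unfolding B_def using U[of t] r by (simp add: ennreal_mult' divide_inverse)
  ultimately have eq: "(\<integral>\<^sup>+t. ennreal (2 * r * Re (f (cp r t))) * ennreal (1 / norm (cp r t - z)) * indicator {0..1} t \<partial>lborel)
     = ennreal (integral {0..1} B)" by simp
  have "integral {0..1} B \<ge> 0"
  proof (rule integral_nonneg[OF intB])
    fix t :: real show "0 \<le> B t" unfolding B_def using U[of t] r by simp
  qed
  then show ?thesis unfolding eq using le
    by (simp add: ennreal_plus[symmetric] del: ennreal_plus)
qed


lemma weak_ball:
  assumes hol: "f holomorphic_on ball 0 1" and pos: "\<forall>z\<in>ball 0 1. Re (f z) > 0"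
    and \<rho>: "0 \<le> \<rho>" "\<rho> < 1" and lam: "lam > 2 * norm (f 0)"
  shows "emeasure lborel {z \<in> ball 0 \<rho>. lam < norm (f z)}
           \<le> ennreal (16 * (1 + 4 * pi)^2 * (norm (f 0))^2 / lam^2)"
proof -
  define r where "r = (1 + \<rho>) / 2"
  have r: "0 < r" "r < 1" "\<rho> < r" using \<rho> unfolding r_def by auto
  define E where "E = {z \<in> ball 0 \<rho>. lam < norm (f z)}"
  define U where "U t = Re (f (cp r t))" for t
  have U: "U t > 0" for t using pos cp_in_ball[OF r(1,2)] unfolding U_def by blast
  have contf: "continuous_on (ball 0 1) f" using hol by (rule holomorphic_on_imp_continuous_on)
  have "open E"
  proof -
    have "continuous_on (ball 0 \<rho>) f" by (rule continuous_on_subset[OF contf]) (use \<rho> in auto)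
    then have "continuous_on (ball 0 \<rho>) (\<lambda>z. norm (f z))" by (intro continuous_intros)
    then have "open (ball 0 \<rho> \<inter> (\<lambda>z. norm (f z)) -` {lam<..})"
      by (intro continuous_open_preimage) auto
    moreover have "ball 0 \<rho> \<inter> (\<lambda>z. norm (f z)) -` {lam<..} = E" unfolding E_def by auto
    ultimately show ?thesis by simp
  qed
  then have Esets[measurable]: "E \<in> sets borel" by (rule borel_open)
  have Esets': "E \<in> sets lborel" using Esets by simp
  have "emeasure lborel E \<le> emeasure lborel (ball (0::complex) 1)"
    by (intro emeasure_mono) (use \<rho> in \<open>auto simp: E_def\<close>)
  then have Efin: "emeasure lborel E < \<infinity>" using emeasure_lborel_ball_finite[of "0::complex" 1] by (simp add: order_le_less_trans)
  define m where "m = measure lborel E"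
  have Em: "emeasure lborel E = ennreal m"
    unfolding m_def using Efin by (simp add: emeasure_eq_ennreal_measure)
  have m0: "m \<ge> 0" unfolding m_def by simp
  have Umeas[measurable]: "U \<in> borel_measurable borel"
    unfolding U_def by (intro borel_measurable_continuous_onI continuous_intros cont_U[OF hol r(1,2)])
  have cpmeas[measurable]: "cp r \<in> borel_measurable borel"
    by (intro borel_measurable_continuous_onI continuous_cp)
  define k where "k t z = ennreal (2 * r * U t) * ennreal (1 / norm (cp r t - z)) * indicator {0..1::real} t" for t z
  have kmeas: "(\<lambda>(z, t). k t z * indicator E z) \<in> borel_measurable (lborel \<Otimes>\<^sub>M lborel)"
    unfolding k_def by measurable
  have kmeas1: "(\<lambda>t. k t z) \<in> borel_measurable lborel" for z
    unfolding k_def by measurable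
  have G: "ennreal (lam / 2) \<le> (\<integral>\<^sup>+t. k t z \<partial>lborel)" if "z \<in> E" for z
  proof (rule ccontr)
    assume "\<not> ennreal (lam / 2) \<le> (\<integral>\<^sup>+t. k t z \<partial>lborel)"
    then have lt: "(\<integral>\<^sup>+t. k t z \<partial>lborel) < ennreal (lam / 2)" by simp
    then obtain g where g: "(\<integral>\<^sup>+t. k t z \<partial>lborel) = ennreal g" "0 \<le> g"
      by (metis ennreal_cases less_top_ennreal top.not_eq_extremum order_less_trans ennreal_less_top)
    have "g < lam / 2" using lt g by (simp add: ennreal_less_iff)
    have zr: "norm z < r" using that r unfolding E_def by auto
    have "ennreal (norm (f z)) \<le> ennreal \<bar>Im (f 0)\<bar> + ennreal g"
      using pointwise_bound[OF hol pos r(1,2) zr] g unfolding k_def U_def by simp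
    then have "norm (f z) \<le> \<bar>Im (f 0)\<bar> + g"
      using g(2) by (simp add: ennreal_plus[symmetric] del: ennreal_plus)
    moreover have "\<bar>Im (f 0)\<bar> \<le> norm (f 0)" by (rule abs_Im_le_cmod)
    moreover have "lam < norm (f z)" using that unfolding E_def by auto
    ultimately show False using \<open>g < lam / 2\<close> lam by linarith
  qed
  have "ennreal (lam / 2) * ennreal m = (\<integral>\<^sup>+z. ennreal (lam / 2) * indicator E z \<partial>lborel)"
    using nn_integral_cmult_indicator[OF Esets', of "ennreal (lam / 2)"] Em by (simp add: mult.commute)
  also have "\<dots> \<le> (\<integral>\<^sup>+z. (\<integral>\<^sup>+t. k t z \<partial>lborel) * indicator E z \<partial>lborel)"
    by (intro nn_integral_mono) (auto simp: G split: split_indicator)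
  also have "\<dots> = (\<integral>\<^sup>+z. (\<integral>\<^sup>+t. k t z * indicator E z \<partial>lborel) \<partial>lborel)"
    by (intro nn_integral_cong nn_integral_multc[symmetric] kmeas1)
  also have "\<dots> = (\<integral>\<^sup>+t. (\<integral>\<^sup>+z. k t z * indicator E z \<partial>lborel) \<partial>lborel)"
    by (rule lborel_pair.Fubini'[symmetric]) (use kmeas in simp)
  also have "\<dots> = (\<integral>\<^sup>+t. ennreal (2 * r * U t) * indicator {0..1::real} t *
       (\<integral>\<^sup>+z. ennreal (1 / norm (cp r t - z)) * indicator E z \<partial>lborel) \<partial>lborel)"
  proof (intro nn_integral_cong)
    fix t :: real
    have "(\<integral>\<^sup>+z. k t z * indicator E z \<partial>lborel) = (\<integral>\<^sup>+z. (ennreal (2 * r * U t) * indicator {0..1::real} t) *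
       (ennreal (1 / norm (cp r t - z)) * indicator E z) \<partial>lborel)"
      unfolding k_def by (simp add: mult_ac)
    also have "\<dots> = ennreal (2 * r * U t) * indicator {0..1::real} t *
       (\<integral>\<^sup>+z. ennreal (1 / norm (cp r t - z)) * indicator E z \<partial>lborel)"
      by (rule nn_integral_cmult) measurable
    finally show "(\<integral>\<^sup>+z. k t z * indicator E z \<partial>lborel) = \<dots>" .
  qed
  also have "\<dots> \<le> (\<integral>\<^sup>+t. ennreal (2 * r * U t) * indicator {0..1::real} t * ennreal ((1 + 4 * pi) * sqrt m) \<partial>lborel)"
    by (intro nn_integral_mono mult_left_mono) (auto simp: m_def intro!: kernel_bound[OF Esets' Efin])
  also have "\<dots> = (\<integral>\<^sup>+t. ennreal (2 * r * U t) * indicator {0..1::real} t \<partial>lborel) * ennreal ((1 + 4 * pi) * sqrt m)"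
    by (rule nn_integral_multc) measurable
  also have "(\<integral>\<^sup>+t. ennreal (2 * r * U t) * indicator {0..1::real} t \<partial>lborel) = ennreal (2 * r * Re (f 0))"
  proof (rule nn_integral_has_integral_lebesgue')
    show "((\<lambda>t. 2 * r * U t) has_integral 2 * r * Re (f 0)) {0..1}"
      unfolding U_def using has_integral_mult_right[OF mean_param[OF hol r(1,2)], of "2 * r"] by simp
  qed (use U r in \<open>auto intro: less_imp_le\<close>)
  finally have ineq: "ennreal (lam / 2 * m) \<le> ennreal (2 * r * Re (f 0) * ((1 + 4 * pi) * sqrt m))"
    using lam m0 by (simp add: ennreal_mult'[symmetric] ennreal_mult''[symmetric])
  have f0: "Re (f 0) > 0" using pos by simp
  have "lam / 2 * m \<le> 2 * r * Re (f 0) * ((1 + 4 * pi) * sqrt m)"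
    using ineq f0 r m0 by (subst (asm) ennreal_le_iff) (auto intro!: mult_nonneg_nonneg)
  also have "\<dots> \<le> 2 * norm (f 0) * ((1 + 4 * pi) * sqrt m)"
  proof (intro mult_right_mono)
    have "Re (f 0) \<le> norm (f 0)" by (rule complex_Re_le_cmod)
    moreover have "r * Re (f 0) \<le> 1 * Re (f 0)" using r f0 by (intro mult_right_mono) auto
    ultimately show "2 * r * Re (f 0) \<le> 2 * norm (f 0)" by simp
  qed (use m0 in \<open>auto intro!: mult_nonneg_nonneg\<close>)
  finally have key: "lam / 2 * m \<le> 2 * norm (f 0) * ((1 + 4 * pi) * sqrt m)" .
  have lam0: "lam > 0" using lam norm_ge_zero[of "f 0"] by linarith
  have "m \<le> 16 * (1 + 4 * pi)^2 * (norm (f 0))^2 / lam^2"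
  proof (cases "m = 0")
    case True then show ?thesis by simp
  next
    case False
    have sm: "sqrt m > 0" using False m0 by simp
    have mm: "m = sqrt m * sqrt m" using m0 by simp
    have "(lam / 2 * sqrt m) * sqrt m \<le> (2 * norm (f 0) * (1 + 4 * pi)) * sqrt m"
      using key by (subst (asm) mm) (simp add: mult_ac)
    then have "lam / 2 * sqrt m \<le> 2 * norm (f 0) * (1 + 4 * pi)"
      using sm by (rule mult_right_le_imp_le)
    then have "sqrt m \<le> 4 * norm (f 0) * (1 + 4 * pi) / lam"
      using lam0 by (simp add: field_simps)
    then have "(sqrt m)^2 \<le> (4 * norm (f 0) * (1 + 4 * pi) / lam)^2"
      using sm by (intro power_mono) auto
    moreover have "(4 * norm (f 0) * (1 + 4 * pi) / lam)^2 = 16 * (1 + 4 * pi)^2 * (norm (f 0))^2 / lam^2"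
      using lam0 by (simp add: power2_eq_square field_simps)
    ultimately show ?thesis using m0 by simp
  qed
  then show ?thesis unfolding E_def[symmetric] Em by (simp add: ennreal_leI)
qed


lemma disk_space: "space disk_area = ball 0 1"
  unfolding disk_area_def by (simp add: space_scale_measure space_restrict_space)

lemma disk_sets: "A \<in> sets lborel \<Longrightarrow> A \<subseteq> ball 0 1 \<Longrightarrow> A \<in> sets disk_area"
  unfolding disk_area_def by (simp add: sets_restrict_space_iff)

lemma disk_emeasure: "A \<subseteq> ball 0 1 \<Longrightarrow> emeasure disk_area A = ennreal (1 / pi) * emeasure lborel A"
  unfolding disk_area_def by (simp add: emeasure_restrict_space)

lemma open_level:
  assumes hol: "f holomorphic_on ball 0 1" and "\<rho> \<le> 1"
  shows "open {z \<in> ball 0 \<rho>. lam < norm (f z)}"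
proof -
  have "continuous_on (ball 0 \<rho>) f"
    by (rule continuous_on_subset[OF holomorphic_on_imp_continuous_on[OF hol]]) (use assms in auto)
  then have "continuous_on (ball 0 \<rho>) (\<lambda>z. norm (f z))" by (intro continuous_intros)
  then have "open (ball 0 \<rho> \<inter> (\<lambda>z. norm (f z)) -` {lam<..})"
    by (intro continuous_open_preimage) auto
  moreover have "ball 0 \<rho> \<inter> (\<lambda>z. norm (f z)) -` {lam<..} = {z \<in> ball 0 \<rho>. lam < norm (f z)}" by auto
  ultimately show ?thesis by simp
qed

lemma weak_disk:
  assumes hol: "f holomorphic_on ball 0 1" and pos: "\<forall>z\<in>ball 0 1. Re (f z) > 0" and lam: "lam > 0"
  shows "emeasure disk_area {z \<in> ball 0 1. norm (f z) > lam}
           \<le> ennreal (16 * (1 + 4 * pi)^2 / lam^2 * (norm (f 0))^2)"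
proof -
  define S where "S = {z \<in> ball 0 1. lam < norm (f z)}"
  define bd where "bd = 16 * (1 + 4 * pi)^2 / lam^2 * (norm (f 0))^2"
  have bd0: "bd \<ge> 0" unfolding bd_def by simp
  have Sopen: "open S" unfolding S_def by (rule open_level[OF hol]) simp
  have Ssub: "S \<subseteq> ball 0 1" unfolding S_def by auto
  have "emeasure lborel S \<le> ennreal bd"
  proof (cases "lam \<le> 2 * norm (f 0)")
    case True
    have "emeasure lborel S \<le> emeasure lborel (ball (0::complex) 1)"
      by (rule emeasure_mono[OF Ssub]) simp
    also have "\<dots> = ennreal pi" by (simp add: emeasure_ball unit_ball_vol_2)
    also have "pi \<le> bd"
    proof -
      have "lam^2 \<le> (2 * norm (f 0))^2" using True lam by (intro power_mono) auto
      then have "lam^2 \<le> 4 * (norm (f 0))^2" by (simp add: power_mult_distrib)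
      moreover have "(1 + 4 * pi)^2 \<ge> (4 * pi)^2" by (intro power_mono) auto
      moreover have "(4 * pi)^2 \<ge> 4 * pi"
      proof -
        have "4 * pi \<ge> 1" using pi_gt3 by simp
        then show ?thesis by (simp add: power2_eq_square)
      qed
      ultimately have "16 * (1 + 4 * pi)^2 * (norm (f 0))^2 \<ge> 16 * (4 * pi) * (lam^2 / 4)"
        by (intro mult_mono) auto
      then have "16 * (1 + 4 * pi)^2 * (norm (f 0))^2 / lam^2 \<ge> 16 * (4 * pi) * (lam^2 / 4) / lam^2"
        by (intro divide_right_mono) auto
      moreover have "16 * (4 * pi) * (lam^2 / 4) / lam^2 = 16 * pi" using lam by simp
      ultimately have "16 * pi \<le> 16 * (1 + 4 * pi)^2 * (norm (f 0))^2 / lam^2" by simp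
      moreover have "pi \<le> 16 * pi" using pi_gt_zero by simp
      moreover have "16 * (1 + 4 * pi)^2 * (norm (f 0))^2 / lam^2 = bd" unfolding bd_def by simp
      ultimately show ?thesis by linarith
    qed
    then have "ennreal pi \<le> ennreal bd" by (rule ennreal_leI)
    finally show ?thesis .
  next
    case False
    then have lam2: "lam > 2 * norm (f 0)" by simp
    define A where "A n = {z \<in> ball 0 (1 - 1 / (real n + 2)). lam < norm (f z)}" for n
    have Asets: "range A \<subseteq> sets lborel"
    proof -
      have "open (A n)" for n unfolding A_def by (rule open_level[OF hol]) simp
      then show ?thesis by auto
    qed
    have inc: "incseq A"
    proof (rule incseq_SucI)
      fix n
      have "1 - 1 / (real n + 2) \<le> 1 - 1 / (real (Suc n) + 2)" by (simp add: frac_le)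
      then show "A n \<subseteq> A (Suc n)" unfolding A_def by auto
    qed
    have UA: "(\<Union>n. A n) = S"
    proof
      show "(\<Union>n. A n) \<subseteq> S"
      proof
        fix z assume "z \<in> (\<Union>n. A n)"
        then obtain n where "norm z < 1 - 1 / (real n + 2)" "lam < norm (f z)" unfolding A_def by auto
        moreover have "1 / (real n + 2) > 0" by simp
        ultimately have "norm z < 1" "lam < norm (f z)" by linarith+
        then show "z \<in> S" unfolding S_def by simp
      qed
      show "S \<subseteq> (\<Union>n. A n)"
      proof
        fix z assume z: "z \<in> S"
        then have "norm z < 1" unfolding S_def by auto
        then obtain n where n: "1 / (real n + 2) < 1 - norm z"
        proof -
          obtain n :: nat where "1 / (1 - norm z) < real n" using reals_Archimedean2 by blast
          then have "1 / (real n + 2) < 1 - norm z" using \<open>norm z < 1\<close>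
            by (simp add: field_simps)
          then show ?thesis using that by blast
        qed
        then have "z \<in> A n" using z unfolding A_def S_def by auto
        then show "z \<in> (\<Union>n. A n)" by blast
      qed
    qed
    have "emeasure lborel S = (SUP n. emeasure lborel (A n))"
      using SUP_emeasure_incseq[OF Asets inc] UA by simp
    also have "\<dots> \<le> ennreal bd"
    proof (rule SUP_least)
      fix n
      have "emeasure lborel (A n) \<le> ennreal (16 * (1 + 4 * pi)^2 * (norm (f 0))^2 / lam^2)"
        unfolding A_def by (rule weak_ball[OF hol pos _ _ lam2]) (auto simp: field_simps)
      also have "16 * (1 + 4 * pi)^2 * (norm (f 0))^2 / lam^2 = bd" unfolding bd_def by simp
      finally show "emeasure lborel (A n) \<le> ennreal bd" .
    qed
    finally show ?thesis .
  qed
  then have "emeasure disk_area S \<le> ennreal (1 / pi) * ennreal bd"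
    unfolding disk_emeasure[OF Ssub] by (rule mult_left_mono) simp
  also have "\<dots> = ennreal (bd / pi)" by (simp add: ennreal_mult'[symmetric])
  also have "\<dots> \<le> ennreal bd"
  proof (intro ennreal_leI)
    have "bd * 1 \<le> bd * pi" using bd0 pi_gt3 by (intro mult_left_mono) auto
    then show "bd / pi \<le> bd" using pi_gt_zero by (simp add: divide_le_eq)
  qed
  finally show ?thesis unfolding S_def bd_def by simp
qed


lemma L1_bound:
  assumes hol: "f holomorphic_on ball 0 1" and pos: "\<forall>z\<in>ball 0 1. Re (f z) > 0"
  shows "(\<integral>\<^sup>+z. ennreal (norm (f z)) \<partial>disk_area) \<le> ennreal ((1 + 4 * (16 * (1 + 4 * pi)^2)) * norm (f 0))"
proof -
  define C where "C = 16 * (1 + 4 * pi)^2"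
  define a where "a = norm (f 0)"
  have "Re (f 0) > 0" using pos by simp
  then have a: "a > 0" unfolding a_def by auto
  define T where "T k = {z \<in> ball 0 1. a * 2^k < norm (f z)}" for k :: nat
  have Tsets: "T k \<in> sets disk_area" for k
  proof (rule disk_sets)
    show "T k \<in> sets lborel" unfolding T_def using open_level[OF hol, of 1] by simp
  qed (auto simp: T_def)
  define R where "R z = (\<Sum>k. ennreal (a * 2^(k+1)) * indicator (T k) z)" for z
  have pw: "ennreal (norm (f z)) \<le> ennreal a + R z" if z: "z \<in> space disk_area" for z
  proof (cases "norm (f z) \<le> a")
    case True then show ?thesis by (simp add: add_increasing2 ennreal_leI)
  next
    case False
    define x where "x = norm (f z) / a"
    have x1: "x > 1" using False a unfolding x_def by (simp add: field_simps)
    obtain N where N: "x < (2::real) ^ N" using real_arch_pow[of 2 x] by auto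
    define n' where "n' = (LEAST n. x \<le> (2::real) ^ n)"
    have n'1: "x \<le> (2::real) ^ n'" unfolding n'_def by (rule LeastI[of _ N]) (use N in simp)
    have "n' \<noteq> 0"
    proof
      assume "n' = 0" with n'1 x1 show False by simp
    qed
    then obtain k where kk: "n' = Suc k" by (cases n') auto
    have "\<not> x \<le> (2::real) ^ k"
      using not_less_Least[of k "\<lambda>n. x \<le> (2::real) ^ n"] kk n'_def by auto
    then have k1: "a * 2^k < norm (f z)" and k2: "norm (f z) \<le> a * 2^(k+1)"
      using n'1 kk a unfolding x_def by (auto simp: field_simps)
    have "z \<in> T k" using z k1 unfolding T_def disk_space by auto
    then have "ennreal (norm (f z)) \<le> ennreal (a * 2^(k+1)) * indicator (T k) z"
      using k2 by (simp add: ennreal_leI)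
    also have "\<dots> \<le> R z" unfolding R_def
      by (rule ennreal_le_suminf[where f="\<lambda>k. ennreal (a * 2^(k+1)) * indicator (T k) z"])
    finally show ?thesis by (simp add: add_increasing)
  qed
  have Rmeas: "R \<in> borel_measurable disk_area" unfolding R_def
    by (intro borel_measurable_suminf_order borel_measurable_times_ennreal borel_measurable_const borel_measurable_indicator Tsets)
  have IR: "(\<integral>\<^sup>+z. R z \<partial>disk_area) = (\<Sum>k. ennreal (a * 2^(k+1)) * emeasure disk_area (T k))"
  proof -
    have "(\<integral>\<^sup>+z. R z \<partial>disk_area) = (\<Sum>k. \<integral>\<^sup>+z. ennreal (a * 2^(k+1)) * indicator (T k) z \<partial>disk_area)"
      unfolding R_def
      by (intro nn_integral_suminf borel_measurable_times_ennreal borel_measurable_const borel_measurable_indicator Tsets)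
    also have "\<dots> = (\<Sum>k. ennreal (a * 2^(k+1)) * emeasure disk_area (T k))"
      by (intro suminf_cong) (rule nn_integral_cmult_indicator[OF Tsets])
    finally show ?thesis .
  qed
  also have "(\<Sum>k. ennreal (a * 2^(k+1)) * emeasure disk_area (T k)) \<le> (\<Sum>k. ennreal (2 * C * a * (1/2)^k))"
  proof (intro suminf_le summableI)
    fix k :: nat
    have lk: "a * 2^k > 0" using a by simp
    have "emeasure disk_area (T k) \<le> ennreal (C / (a * 2^k)^2 * a^2)"
      unfolding T_def C_def a_def using weak_disk[OF hol pos lk[unfolded a_def]] by simp
    then have "ennreal (a * 2^(k+1)) * emeasure disk_area (T k) \<le> ennreal (a * 2^(k+1)) * ennreal (C / (a * 2^k)^2 * a^2)"
      by (rule mult_left_mono) simp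
    also have "\<dots> = ennreal (a * 2^(k+1) * (C / (a * 2^k)^2 * a^2))"
      by (rule ennreal_mult'[symmetric]) (use a in simp)
    also have "a * 2^(k+1) * (C / (a * 2^k)^2 * a^2) = 2 * C * a * (1/2)^k"
      using a by (simp add: power2_eq_square power_mult_distrib field_simps power_add)
    finally show "ennreal (a * 2^(k+1)) * emeasure disk_area (T k) \<le> ennreal (2 * C * a * (1/2)^k)" .
  qed
  also have "(\<Sum>k. ennreal (2 * C * a * (1/2)^k)) = ennreal (\<Sum>k. 2 * C * a * (1/2)^k)"
    using a unfolding C_def by (intro suminf_ennreal2) (auto intro!: summable_mult summable_geometric)
  also have "(\<Sum>k. 2 * C * a * (1/2::real)^k) = 4 * C * a"
    using suminf_mult[OF summable_geometric[of "1/2::real"], of "2 * C * a"] suminf_geometric[of "1/2::real"]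
    by simp
  finally have IR': "(\<integral>\<^sup>+z. R z \<partial>disk_area) \<le> ennreal (4 * C * a)" .
  have "(\<integral>\<^sup>+z. ennreal (norm (f z)) \<partial>disk_area) \<le> (\<integral>\<^sup>+z. ennreal a + R z \<partial>disk_area)"
    by (intro nn_integral_mono pw)
  also have "\<dots> = (\<integral>\<^sup>+z. ennreal a \<partial>disk_area) + (\<integral>\<^sup>+z. R z \<partial>disk_area)"
    using Rmeas by (intro nn_integral_add) auto
  also have "(\<integral>\<^sup>+z. ennreal a \<partial>disk_area) = ennreal a"
  proof -
    have "emeasure disk_area (space disk_area) = ennreal (1 / pi) * emeasure lborel (ball (0::complex) 1)"
      unfolding disk_space by (rule disk_emeasure) simp
    also have "\<dots> = ennreal (1 / pi) * ennreal pi" by (simp add: emeasure_ball unit_ball_vol_2)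
    also have "\<dots> = 1" by (simp add: ennreal_mult'[symmetric])
    finally show ?thesis by simp
  qed
  also have "ennreal a + (\<integral>\<^sup>+z. R z \<partial>disk_area) \<le> ennreal a + ennreal (4 * C * a)" using IR' by (rule add_left_mono)
  also have "ennreal a + ennreal (4 * C * a) = ennreal ((1 + 4 * C) * a)"
    using a unfolding C_def by (simp add: ennreal_plus[symmetric] algebra_simps del: ennreal_plus)
  finally show ?thesis unfolding C_def a_def .
qed

theorem lemma3p4:
  shows "(\<exists>C1::real>0. \<forall>f::complex \<Rightarrow> complex. \<forall>lam::real.
            f holomorphic_on ball 0 1 \<longrightarrow> (\<forall>z\<in>ball 0 1. Re (f z) > 0) \<longrightarrow> lam > 0 \<longrightarrow>
            emeasure disk_area {z \<in> ball 0 1. norm (f z) > lam}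
              \<le> ennreal (C1 / lam\<^sup>2 * (norm (f 0))\<^sup>2))
       \<and> (\<exists>K1::real>0. \<forall>f::complex \<Rightarrow> complex.
            f holomorphic_on ball 0 1 \<longrightarrow> (\<forall>z\<in>ball 0 1. Re (f z) > 0) \<longrightarrow>
            (\<integral>\<^sup>+ z. ennreal (norm (f z)) \<partial>disk_area) \<le> ennreal (K1 * norm (f 0)))"
proof (intro conjI)
  show "\<exists>C1::real>0. \<forall>f::complex \<Rightarrow> complex. \<forall>lam::real.
            f holomorphic_on ball 0 1 \<longrightarrow> (\<forall>z\<in>ball 0 1. Re (f z) > 0) \<longrightarrow> lam > 0 \<longrightarrow>
            emeasure disk_area {z \<in> ball 0 1. norm (f z) > lam}
              \<le> ennreal (C1 / lam\<^sup>2 * (norm (f 0))\<^sup>2)"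
  proof (intro exI[of _ "16 * (1 + 4 * pi)^2"] conjI allI impI)
    have "(0::real) < 1 + 4 * pi" using pi_gt_zero by linarith
    then show "(0::real) < 16 * (1 + 4 * pi)^2" by simp
    fix f :: "complex \<Rightarrow> complex" and lam :: real
    assume "f holomorphic_on ball 0 1" "\<forall>z\<in>ball 0 1. Re (f z) > 0" "lam > 0"
    then show "emeasure disk_area {z \<in> ball 0 1. norm (f z) > lam}
              \<le> ennreal (16 * (1 + 4 * pi)^2 / lam\<^sup>2 * (norm (f 0))\<^sup>2)"
      by (rule weak_disk)
  qed
  show "\<exists>K1::real>0. \<forall>f::complex \<Rightarrow> complex.
            f holomorphic_on ball 0 1 \<longrightarrow> (\<forall>z\<in>ball 0 1. Re (f z) > 0) \<longrightarrow>
            (\<integral>\<^sup>+ z. ennreal (norm (f z)) \<partial>disk_area) \<le> ennreal (K1 * norm (f 0))"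
  proof (intro exI[of _ "1 + 4 * (16 * (1 + 4 * pi)^2)"] conjI allI impI)
    show "(0::real) < 1 + 4 * (16 * (1 + 4 * pi)^2)" by (simp add: add_pos_nonneg)
    fix f :: "complex \<Rightarrow> complex"
    assume "f holomorphic_on ball 0 1" "\<forall>z\<in>ball 0 1. Re (f z) > 0"
    then show "(\<integral>\<^sup>+ z. ennreal (norm (f z)) \<partial>disk_area) \<le> ennreal ((1 + 4 * (16 * (1 + 4 * pi)^2)) * norm (f 0))"
      by (rule L1_bound)
  qed
qed

end
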